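(* Let $\varphi$ be a holomorphic self-map of $\mathbb{D}$ and $C_\varphi:H^2(\mathbb{D})\to H^2(\mathbb{D})$ the corresponding composition operator. Then the adjoint $C_\varphi^*$ is a composition operator (i.e. $C_\varphi^*=C_\psi$ for some holomorphic self-map $\psi$ of $\mathbb{D}$) if and only if $\varphi(z)=\delta z$ for some constant $\delta\in\mathbb{C}$ with $|\delta|\le1$.
   Context: $\mathbb{D}$ is the open unit disc; $H^2(\mathbb{D})$ is the Hardy space of holomorphic $f(z)=\sum a_nz^n$ with $\|f\|^2=\sum|a_n|^2<\infty$, a reproducing kernel Hilbert space with kernel $\kappa_w(z)=\frac{1}{1-\overline{w}z}$. $C_\varphi f=f\circ\varphi$. *)

theory Defs
  imports "HOL-Complex_Analysis.Complex_Analysis"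
begin

definition taylor_coeff :: "(complex \<Rightarrow> complex) \<Rightarrow> nat \<Rightarrow> complex" where
  "taylor_coeff f n = (deriv ^^ n) f 0 / of_nat (fact n)"

definition hardy2 :: "(complex \<Rightarrow> complex) set" where
  "hardy2 = {f. f holomorphic_on ball 0 1 \<and> summable (\<lambda>n. (cmod (taylor_coeff f n))^2)}"

definition h2_inner :: "(complex \<Rightarrow> complex) \<Rightarrow> (complex \<Rightarrow> complex) \<Rightarrow> complex" where
  "h2_inner f g = (\<Sum>n. taylor_coeff f n * cnj (taylor_coeff g n))"

definition disc_selfmap :: "(complex \<Rightarrow> complex) \<Rightarrow> bool" where
  "disc_selfmap \<phi> \<longleftrightarrow> \<phi> holomorphic_on ball 0 1 \<and> \<phi> ` ball 0 1 \<subseteq> ball 0 1"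

definition comp_op :: "(complex \<Rightarrow> complex) \<Rightarrow> (complex \<Rightarrow> complex) \<Rightarrow> (complex \<Rightarrow> complex)" where
  "comp_op \<phi> f = f \<circ> \<phi>"

definition h2_adjoint_of :: "((complex \<Rightarrow> complex) \<Rightarrow> (complex \<Rightarrow> complex)) \<Rightarrow> ((complex \<Rightarrow> complex) \<Rightarrow> (complex \<Rightarrow> complex)) \<Rightarrow> bool" where
  "h2_adjoint_of T S \<longleftrightarrow> (\<forall>f\<in>hardy2. \<forall>g\<in>hardy2. h2_inner (S f) g = h2_inner f (T g))"

end

theory Submission
  imports Defs
begin

lemma mono_coeff: "taylor_coeff (\<lambda>w. w ^ k) n = (if n = k then 1 else 0)"
proof -
  have h: "(deriv ^^ n) (\<lambda>w::complex. (w - 0) ^ k) 0 = pochhammer (of_nat (Suc k - n)) n * (0 - 0) ^ (k - n)"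
    by (rule higher_deriv_power)
  then have h: "(deriv ^^ n) (\<lambda>w::complex. w ^ k) 0 = pochhammer (of_nat (Suc k - n)) n * 0 ^ (k - n)"
    by simp
  show ?thesis
  proof (cases "n = k")
    case True
    have p: "pochhammer (1::complex) k = fact k" by (rule pochhammer_fact[symmetric])
    show ?thesis using h True p by (simp add: taylor_coeff_def)
  next
    case False
    show ?thesis
    proof (cases "n < k")
      case True then show ?thesis using h by (simp add: taylor_coeff_def)
    next
      case f2: False
      then have "Suc k - n = 0" "n > 0" using False by auto
      then show ?thesis using h False by (simp add: taylor_coeff_def pochhammer_0_left)
    qed
  qed
qed
lemma mono_hardy: "(\<lambda>w. w ^ k) \<in> hardy2"
proof -
  have "(\<lambda>n. (cmod (taylor_coeff (\<lambda>w. w ^ k) n))^2) = (\<lambda>n. if n = k then 1 else 0)"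
    by (auto simp: mono_coeff)
  moreover have "summable (\<lambda>n::nat. if n = k then (1::real) else 0)"
    using sums_single[of k "\<lambda>_. (1::real)"] by (auto simp: sums_iff)
  ultimately show ?thesis unfolding hardy2_def by (auto intro: holomorphic_intros)
qed

lemma inner_mono_right: "h2_inner F (\<lambda>w. w ^ k) = taylor_coeff F k"
proof -
  have "(\<lambda>n. taylor_coeff F n * cnj (taylor_coeff (\<lambda>w. w ^ k) n)) = (\<lambda>n. if n = k then taylor_coeff F n else 0)"
    by (auto simp: mono_coeff)
  then show ?thesis unfolding h2_inner_def using sums_single[of k "taylor_coeff F"]
    by (simp add: sums_iff)
qed

lemma inner_mono_left: "h2_inner (\<lambda>w. w ^ k) G = cnj (taylor_coeff G k)"
proof -
  have "(\<lambda>n. taylor_coeff (\<lambda>w. w ^ k) n * cnj (taylor_coeff G n)) = (\<lambda>n. if n = k then cnj (taylor_coeff G n) else 0)"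
    by (auto simp: mono_coeff)
  then show ?thesis unfolding h2_inner_def using sums_single[of k "\<lambda>n. cnj (taylor_coeff G n)"]
    by (simp add: sums_iff)
qed

lemma linear_coeff:
  assumes f: "f holomorphic_on ball 0 1" and d: "cmod \<delta> \<le> 1"
    and eq: "\<forall>z\<in>ball 0 1. \<phi> z = \<delta> * z"
  shows "taylor_coeff (f \<circ> \<phi>) n = \<delta> ^ n * taylor_coeff f n"
proof -
  have ev: "eventually (\<lambda>z. (f \<circ> \<phi>) z = f (\<delta> * z)) (nhds 0)"
    using eventually_nhds_in_open[of "ball (0::complex) 1" 0] eq
    by (auto elim!: eventually_mono)
  have "(deriv ^^ n) (f \<circ> \<phi>) 0 = (deriv ^^ n) (\<lambda>z. f (\<delta> * z)) 0"
    by (rule higher_deriv_cong_ev[OF ev refl])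
  also have "\<dots> = \<delta> ^ n * (deriv ^^ n) f (\<delta> * 0)"
  proof (rule higher_deriv_compose_linear[OF f])
    fix w :: complex assume "w \<in> ball 0 1"
    then have "cmod w < 1" by simp
    moreover have "cmod \<delta> * cmod w \<le> 1 * cmod w" by (rule mult_right_mono[OF d norm_ge_zero])
    ultimately show "\<delta> * w \<in> ball 0 1" by (simp add: norm_mult)
  qed auto
  finally show ?thesis by (simp add: taylor_coeff_def)
qed


theorem theorem3p1:
  assumes "disc_selfmap \<phi>"
  shows "(\<exists>\<psi>. disc_selfmap \<psi> \<and> h2_adjoint_of (comp_op \<psi>) (comp_op \<phi>)) \<longleftrightarrow>
         (\<exists>\<delta>::complex. cmod \<delta> \<le> 1 \<and> (\<forall>z\<in>ball 0 1. \<phi> z = \<delta> * z))"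
proof
  assume "\<exists>\<psi>. disc_selfmap \<psi> \<and> h2_adjoint_of (comp_op \<psi>) (comp_op \<phi>)"
  then obtain \<psi> where ds: "disc_selfmap \<psi>" and adj: "h2_adjoint_of (comp_op \<psi>) (comp_op \<phi>)" by blast
  have key: "taylor_coeff ((\<lambda>w. w ^ j) \<circ> \<phi>) k = cnj (taylor_coeff ((\<lambda>w. w ^ k) \<circ> \<psi>) j)" for j k
  proof -
    have "h2_inner ((\<lambda>w. w ^ j) \<circ> \<phi>) (\<lambda>w. w ^ k) = h2_inner (\<lambda>w. w ^ j) ((\<lambda>w. w ^ k) \<circ> \<psi>)"
      using adj mono_hardy[of j] mono_hardy[of k]
      unfolding h2_adjoint_of_def comp_op_def by blast
    then show ?thesis by (simp only: inner_mono_right inner_mono_left)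
  qed
  have c0: "(\<lambda>w::complex. w ^ 0) \<circ> g = (\<lambda>w. w ^ 0)" for g :: "complex \<Rightarrow> complex" by auto
  have c1: "(\<lambda>w::complex. w ^ 1) \<circ> g = g" for g :: "complex \<Rightarrow> complex" by auto
  have tc0: "taylor_coeff g 0 = g 0" for g by (simp add: taylor_coeff_def)
  have phi0: "\<phi> 0 = 0"
    using key[of 1 0] by (simp only: c0 c1 tc0 mono_coeff) simp
  have psi0: "\<psi> 0 = 0"
    using key[of 0 1] by (simp only: c0 c1 tc0 mono_coeff) simp
  have hpsi: "\<psi> holomorphic_on ball 0 1" using ds by (simp add: disc_selfmap_def)
  have hphi: "\<phi> holomorphic_on ball 0 1" using assms by (simp add: disc_selfmap_def)
  obtain D where D: "(\<psi> has_field_derivative D) (at 0)"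
    using hpsi holomorphic_on_imp_differentiable_at[of \<psi> "ball 0 1" 0]
    by (auto simp: field_differentiable_def)
  have ck: "taylor_coeff \<phi> k = 0" if "k \<ge> 2" for k
  proof -
    have "((\<lambda>z. \<psi> z ^ k) has_field_derivative (of_nat k * (D * \<psi> 0 ^ (k - 1)))) (at 0)"
      using DERIV_power[OF D, of k] by simp
    then have "deriv (\<lambda>z. \<psi> z ^ k) 0 = 0"
      using psi0 that by (simp add: DERIV_imp_deriv)
    then have "taylor_coeff ((\<lambda>w. w ^ k) \<circ> \<psi>) 1 = 0"
      by (simp add: taylor_coeff_def o_def)
    then show ?thesis using key[of 1 k] by (simp only: c1) simp
  qed
  define \<delta> where "\<delta> = taylor_coeff \<phi> 1"
  have lin: "\<phi> z = \<delta> * z" if z: "z \<in> ball 0 1" for z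
  proof -
    have s: "(\<lambda>n. taylor_coeff \<phi> n * z ^ n) sums \<phi> z"
      using holomorphic_power_series[OF hphi z] by (simp add: taylor_coeff_def)
    have "(\<lambda>n. taylor_coeff \<phi> n * z ^ n) = (\<lambda>n. if n = 1 then \<delta> * z else 0)"
    proof
      fix n show "taylor_coeff \<phi> n * z ^ n = (if n = 1 then \<delta> * z else 0)"
      proof (cases "n = 0 \<or> n = 1")
        case True then show ?thesis using phi0 by (auto simp: tc0 \<delta>_def)
      next
        case False then show ?thesis using ck[of n] by auto
      qed
    qed
    with s have "(\<lambda>n. if n = 1 then \<delta> * z else 0) sums \<phi> z" by simp
    moreover have "(\<lambda>n. if n = 1 then \<delta> * z else 0) sums (\<delta> * z)"
      using sums_single[of 1 "\<lambda>_. \<delta> * z"] by simp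
    ultimately show ?thesis using sums_unique2 by blast
  qed
  have "cmod \<delta> \<le> 1"
  proof (rule ccontr)
    assume "\<not> cmod \<delta> \<le> 1"
    then have n: "cmod \<delta> > 1" by simp
    then have "\<delta> \<noteq> 0" by auto
    have "1 / \<delta> \<in> ball 0 1" using n by (simp add: norm_divide divide_less_eq)
    then have "\<phi> (1 / \<delta>) \<in> ball 0 1" using assms unfolding disc_selfmap_def by blast
    moreover have "\<phi> (1 / \<delta>) = 1" using lin[OF \<open>1 / \<delta> \<in> ball 0 1\<close>] \<open>\<delta> \<noteq> 0\<close> by simp
    ultimately show False by simp
  qed
  then show "\<exists>\<delta>::complex. cmod \<delta> \<le> 1 \<and> (\<forall>z\<in>ball 0 1. \<phi> z = \<delta> * z)"
    using lin by blast
next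
  assume "\<exists>\<delta>::complex. cmod \<delta> \<le> 1 \<and> (\<forall>z\<in>ball 0 1. \<phi> z = \<delta> * z)"
  then obtain \<delta> :: complex where d: "cmod \<delta> \<le> 1" and eq: "\<forall>z\<in>ball 0 1. \<phi> z = \<delta> * z" by blast
  define \<psi> where "\<psi> = (\<lambda>z. cnj \<delta> * z)"
  have dc: "cmod (cnj \<delta>) \<le> 1" using d by simp
  have eq2: "\<forall>z\<in>ball 0 1. \<psi> z = cnj \<delta> * z" by (simp add: \<psi>_def)
  have "disc_selfmap \<psi>"
    unfolding disc_selfmap_def \<psi>_def
  proof
    show "(\<lambda>z. cnj \<delta> * z) ` ball 0 1 \<subseteq> ball 0 1"
    proof
      fix y assume "y \<in> (\<lambda>z. cnj \<delta> * z) ` ball 0 1"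
      then obtain w where w: "cmod w < 1" and y: "y = cnj \<delta> * w" by auto
      have "cmod \<delta> * cmod w \<le> 1 * cmod w" by (rule mult_right_mono[OF d norm_ge_zero])
      then show "y \<in> ball 0 1" using w y by (simp add: norm_mult)
    qed
  qed (auto intro: holomorphic_intros)
  moreover have "h2_adjoint_of (comp_op \<psi>) (comp_op \<phi>)"
    unfolding h2_adjoint_of_def comp_op_def h2_inner_def
  proof (intro ballI)
    fix f g assume f: "f \<in> hardy2" and g: "g \<in> hardy2"
    have hf: "f holomorphic_on ball 0 1" and hg: "g holomorphic_on ball 0 1"
      using f g by (auto simp: hardy2_def)
    show "(\<Sum>n. taylor_coeff (f \<circ> \<phi>) n * cnj (taylor_coeff g n)) =
          (\<Sum>n. taylor_coeff f n * cnj (taylor_coeff (g \<circ> \<psi>) n))"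
      by (simp add: linear_coeff[OF hf d eq] linear_coeff[OF hg dc eq2] mult_ac)
  qed
  ultimately show "\<exists>\<psi>. disc_selfmap \<psi> \<and> h2_adjoint_of (comp_op \<psi>) (comp_op \<phi>)" by blast
qed


end
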